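(* Let $\mathcal{M}=(S,E,T)$ be a trivially parametric Markov chain satisfying the standing assumptions below. Then every never-worse equivalence class that contains neither $\mathit{fin}$ nor $\mathit{fail}$ has exactly one exit.
   Context: A trivially parametric Markov chain $\mathcal{M}=(S,E,T)$ consists of a finite set of states $S$, targets $T=\{\mathit{fin},\mathit{fail}\}$ with no outgoing edges, and edges $E\subseteq(S\setminus T)\times S$. A graph-preserving valuation assigns to each non-target $s$ a full-support probability distribution on its successor set $sE$; $P_{\mathsf{val}}(s)$ is the probability of reaching $\mathit{fin}$ from $s$. $s\sim s'$ iff $P_{\mathsf{val}}(s)=P_{\mathsf{val}}(s')$ for all graph-preserving valuations; equivalence classes are the classes of $\sim$. A state $s$ is an exit of $U\subseteq S$ if $s\in U$ and $sE\not\subseteq U$. Standing assumptions: the equivalence classes of $\mathit{fin}$ and $\mathit{fail}$ are $\{\mathit{fin}\}$ and $\{\mathit{fail}\}$; no state has a self-loop; every non-target state has exactly two successors. *)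

theory Defs
  imports Complex_Main
begin

text \<open>Trivially parametric Markov chain (S, E, T) with targets T = {fin, fail}.\<close>

definition tpmc :: "'a set \<Rightarrow> ('a \<times> 'a) set \<Rightarrow> 'a \<Rightarrow> 'a \<Rightarrow> bool" where
  "tpmc S E fin fail \<longleftrightarrow> finite S \<and> fin \<in> S \<and> fail \<in> S \<and> fin \<noteq> fail \<and>
     E \<subseteq> (S - {fin, fail}) \<times> S"

definition succs :: "('a \<times> 'a) set \<Rightarrow> 'a \<Rightarrow> 'a set" where
  "succs E s = {t. (s, t) \<in> E}"

definition graph_preserving ::
  "'a set \<Rightarrow> ('a \<times> 'a) set \<Rightarrow> 'a \<Rightarrow> 'a \<Rightarrow> ('a \<Rightarrow> 'a \<Rightarrow> real) \<Rightarrow> bool" where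
  "graph_preserving S E fin fail val \<longleftrightarrow>
     (\<forall>s \<in> S - {fin, fail}. (\<forall>t \<in> succs E s. val s t > 0) \<and> (\<Sum>t \<in> succs E s. val s t) = 1)"

fun reach_within ::
  "('a \<times> 'a) set \<Rightarrow> 'a \<Rightarrow> 'a \<Rightarrow> ('a \<Rightarrow> 'a \<Rightarrow> real) \<Rightarrow> nat \<Rightarrow> 'a \<Rightarrow> real" where
  "reach_within E fin fail val 0 s = (if s = fin then 1 else 0)"
| "reach_within E fin fail val (Suc n) s =
     (if s = fin then 1 else if s = fail then 0
      else (\<Sum>t \<in> succs E s. val s t * reach_within E fin fail val n t))"

text \<open>P_val(s): probability of eventually reaching fin (limit of the increasing bounded sequence).\<close>
definition reach_prob ::
  "('a \<times> 'a) set \<Rightarrow> 'a \<Rightarrow> 'a \<Rightarrow> ('a \<Rightarrow> 'a \<Rightarrow> real) \<Rightarrow> 'a \<Rightarrow> real" where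
  "reach_prob E fin fail val s = (SUP n. reach_within E fin fail val n s)"

definition equiv_states ::
  "'a set \<Rightarrow> ('a \<times> 'a) set \<Rightarrow> 'a \<Rightarrow> 'a \<Rightarrow> 'a \<Rightarrow> 'a \<Rightarrow> bool" where
  "equiv_states S E fin fail s s' \<longleftrightarrow>
     (\<forall>val. graph_preserving S E fin fail val \<longrightarrow>
        reach_prob E fin fail val s = reach_prob E fin fail val s')"

definition equiv_class :: "'a set \<Rightarrow> ('a \<times> 'a) set \<Rightarrow> 'a \<Rightarrow> 'a \<Rightarrow> 'a \<Rightarrow> 'a set" where
  "equiv_class S E fin fail s = {s' \<in> S. equiv_states S E fin fail s s'}"

definition is_exit :: "('a \<times> 'a) set \<Rightarrow> 'a set \<Rightarrow> 'a \<Rightarrow> bool" where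
  "is_exit E U s \<longleftrightarrow> s \<in> U \<and> \<not> succs E s \<subseteq> U"

end

theory Submission
  imports Defs
begin

lemma succs_empty:
  assumes "tpmc S E fin fail" "s \<notin> S - {fin, fail}"
  shows "succs E s = {}"
  using assms unfolding tpmc_def succs_def by auto

lemma succs_S:
  assumes "tpmc S E fin fail"
  shows "succs E s \<subseteq> S" "finite (succs E s)"
proof -
  show "succs E s \<subseteq> S" using assms unfolding tpmc_def succs_def by auto
  then show "finite (succs E s)" using assms unfolding tpmc_def by (auto intro: finite_subset)
qed

lemma vpos:
  assumes "tpmc S E fin fail" "graph_preserving S E fin fail val" "t \<in> succs E s"
  shows "0 < val s t"
proof -
  have "s \<in> S - {fin, fail}" using succs_empty[OF assms(1)] assms(3) by blast
  then show ?thesis using assms(2,3) unfolding graph_preserving_def by auto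
qed

lemma vsum:
  assumes "tpmc S E fin fail" "graph_preserving S E fin fail val" "succs E s \<noteq> {}"
  shows "(\<Sum>t \<in> succs E s. val s t) = 1"
proof -
  have "s \<in> S - {fin, fail}" using succs_empty[OF assms(1)] assms(3) by blast
  then show ?thesis using assms(2) unfolding graph_preserving_def by auto
qed

lemma rw_props:
  assumes mc: "tpmc S E fin fail" and gp: "graph_preserving S E fin fail val"
  shows "0 \<le> reach_within E fin fail val n s \<and> reach_within E fin fail val n s \<le> 1 \<and>
         reach_within E fin fail val n s \<le> reach_within E fin fail val (Suc n) s"
proof (induction n arbitrary: s)
  case 0
  have "0 \<le> (\<Sum>t \<in> succs E s. val s t * reach_within E fin fail val 0 t)"
    by (rule sum_nonneg) (simp add: less_imp_le vpos[OF mc gp])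
  then show ?case by auto
next
  case (Suc n)
  show ?case
  proof (cases "s = fin \<or> s = fail")
    case True
    then show ?thesis using mc unfolding tpmc_def by auto
  next
    case False
    have fs: "finite (succs E s)" using succs_S[OF mc] by blast
    have a: "0 \<le> (\<Sum>t \<in> succs E s. val s t * reach_within E fin fail val n t)"
      by (rule sum_nonneg) (simp add: Suc.IH less_imp_le vpos[OF mc gp])
    have b: "(\<Sum>t \<in> succs E s. val s t * reach_within E fin fail val n t) \<le> 1"
    proof (cases "succs E s = {}")
      case True then show ?thesis by simp
    next
      case False
      have "(\<Sum>t \<in> succs E s. val s t * reach_within E fin fail val n t) \<le> (\<Sum>t \<in> succs E s. val s t)"
        by (rule sum_mono) (metis Suc.IH less_imp_le mult_left_le vpos[OF mc gp])
      then show ?thesis using vsum[OF mc gp False] by simp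
    qed
    have c: "(\<Sum>t \<in> succs E s. val s t * reach_within E fin fail val n t) \<le>
             (\<Sum>t \<in> succs E s. val s t * reach_within E fin fail val (Suc n) t)"
    proof (rule sum_mono)
      fix t assume "t \<in> succs E s"
      have "reach_within E fin fail val n t \<le> reach_within E fin fail val (Suc n) t" using Suc.IH by blast
      then show "val s t * reach_within E fin fail val n t \<le> val s t * reach_within E fin fail val (Suc n) t"
        using vpos[OF mc gp \<open>t \<in> succs E s\<close>] by (simp add: mult_left_mono)
    qed
    show ?thesis using False a b c by simp
  qed
qed

lemma rw_lim:
  assumes mc: "tpmc S E fin fail" and gp: "graph_preserving S E fin fail val"
  shows "(\<lambda>n. reach_within E fin fail val n s) \<longlonglongrightarrow> reach_prob E fin fail val s"
  unfolding reach_prob_def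
proof (rule LIMSEQ_incseq_SUP)
  show "bdd_above (range (\<lambda>n. reach_within E fin fail val n s))"
    using rw_props[OF mc gp] by (intro bdd_aboveI[where M=1]) auto
  show "incseq (\<lambda>n. reach_within E fin fail val n s)"
    using rw_props[OF mc gp] by (intro incseq_SucI) auto
qed

lemma harmonic:
  assumes mc: "tpmc S E fin fail" and gp: "graph_preserving S E fin fail val"
    and s: "s \<noteq> fin" "s \<noteq> fail"
  shows "reach_prob E fin fail val s = (\<Sum>t \<in> succs E s. val s t * reach_prob E fin fail val t)"
proof -
  have l1: "(\<lambda>n. reach_within E fin fail val (Suc n) s) \<longlonglongrightarrow> reach_prob E fin fail val s"
    using rw_lim[OF mc gp] by (rule LIMSEQ_Suc)
  have l2: "(\<lambda>n. (\<Sum>t \<in> succs E s. val s t * reach_within E fin fail val n t)) \<longlonglongrightarrow>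
      (\<Sum>t \<in> succs E s. val s t * reach_prob E fin fail val t)"
    by (intro tendsto_sum tendsto_mult_left rw_lim[OF mc gp])
  have "(\<lambda>n. reach_within E fin fail val (Suc n) s) = (\<lambda>n. (\<Sum>t \<in> succs E s. val s t * reach_within E fin fail val n t))"
    using s by simp
  then show ?thesis using l1 l2 LIMSEQ_unique by metis
qed

lemma rp_fin: "reach_prob E fin fail val fin = 1"
proof -
  have "\<And>n. reach_within E fin fail val n fin = 1" by (case_tac n) auto
  then show ?thesis unfolding reach_prob_def by simp
qed

lemma closed_zero:
  assumes cl: "\<forall>u\<in>U. succs E u \<subseteq> U" and nf: "fin \<notin> U" and s: "s \<in> U"
  shows "reach_prob E fin fail val s = 0"
proof -
  have "\<forall>s\<in>U. reach_within E fin fail val n s = 0" for n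
  proof (induction n)
    case 0 then show ?case using nf by auto
  next
    case (Suc n)
    show ?case
    proof
      fix s assume "s \<in> U"
      then have "\<forall>t\<in>succs E s. val s t * reach_within E fin fail val n t = 0"
        using Suc cl by auto
      then have "(\<Sum>t\<in>succs E s. val s t * reach_within E fin fail val n t) = 0"
        by (rule sum.neutral)
      then show "reach_within E fin fail val (Suc n) s = 0" using nf \<open>s \<in> U\<close> by auto
    qed
  qed
  then show ?thesis unfolding reach_prob_def using s by simp
qed

lemma rp_fail:
  assumes mc: "tpmc S E fin fail"
  shows "reach_prob E fin fail val fail = 0"
proof (rule closed_zero[where U="{fail}"])
  show "\<forall>u\<in>{fail}. succs E u \<subseteq> {fail}" using succs_empty[OF mc, of fail] by auto
  show "fin \<notin> {fail}" using mc unfolding tpmc_def by auto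
qed auto

lemma reach_fin:
  assumes mc: "tpmc S E fin fail"
    and fail_class: "equiv_class S E fin fail fail = {fail}"
    and s: "s \<in> S" "s \<noteq> fail"
  shows "(s, fin) \<in> E\<^sup>*"
proof (rule ccontr)
  assume nr: "(s, fin) \<notin> E\<^sup>*"
  let ?U = "{t. (s, t) \<in> E\<^sup>*}"
  have "\<forall>val. graph_preserving S E fin fail val \<longrightarrow>
      reach_prob E fin fail val fail = reach_prob E fin fail val s"
  proof (intro allI impI)
    fix val
    have "reach_prob E fin fail val s = 0"
    proof (rule closed_zero[where U="?U"])
      show "\<forall>u\<in>?U. succs E u \<subseteq> ?U" unfolding succs_def
        by (auto intro: rtrancl_into_rtrancl)
    qed (use nr in auto)
    then show "reach_prob E fin fail val fail = reach_prob E fin fail val s"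
      using rp_fail[OF mc] by simp
  qed
  then have "s \<in> equiv_class S E fin fail fail"
    unfolding equiv_class_def equiv_states_def using s by auto
  then show False using fail_class s by auto
qed

lemma path_avoid:
  assumes "(u, v) \<in> R\<^sup>*"
  shows "(u, v) \<in> {(a, b). (a, b) \<in> R \<and> b \<noteq> z}\<^sup>* \<or> (z, v) \<in> {(a, b). (a, b) \<in> R \<and> b \<noteq> z}\<^sup>*"
  using assms
proof (induction rule: converse_rtrancl_induct)
  case base then show ?case by simp
next
  case (step u w)
  show ?case
  proof (cases "(w, v) \<in> {(a, b). (a, b) \<in> R \<and> b \<noteq> z}\<^sup>*")
    case wv: True
    show ?thesis
    proof (cases "w = z")
      case True then show ?thesis using wv by simp
    next
      case False
      then have "(u, w) \<in> {(a, b). (a, b) \<in> R \<and> b \<noteq> z}" using step by simp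
      then show ?thesis using wv by (meson converse_rtrancl_into_rtrancl)
    qed
  next
    case False then show ?thesis using step by simp
  qed
qed


lemma perturb_le:
  assumes mc: "tpmc S E fin fail"
    and fail_class: "equiv_class S E fin fail fail = {fail}"
    and gp: "graph_preserving S E fin fail val"
    and gp': "graph_preserving S E fin fail val'"
    and same: "\<forall>s. s \<noteq> x \<longrightarrow> val' s = val s"
    and y: "y \<in> S" "x \<noteq> y"
    and eqxy: "\<forall>val. graph_preserving S E fin fail val \<longrightarrow>
        reach_prob E fin fail val x = reach_prob E fin fail val y"
    and path: "(y, fin) \<in> {(a, b). (a, b) \<in> E \<and> b \<noteq> x}\<^sup>*"
    and s: "s \<in> S"
  shows "reach_prob E fin fail val' s - reach_prob E fin fail val s \<le> 0"
proof (rule ccontr)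
  assume neg: "\<not> ?thesis"
  define D where "D t = reach_prob E fin fail val' t - reach_prob E fin fail val t" for t
  have finS: "finite S" and finS': "fin \<in> S" and failS: "fail \<in> S" and ff: "fin \<noteq> fail"
    using mc unfolding tpmc_def by auto
  define M where "M = Max (D ` S)"
  have DleM: "D t \<le> M" if "t \<in> S" for t unfolding M_def using finS that by auto
  have "D s > 0" using neg unfolding D_def by simp
  then have Mpos: "M > 0" using DleM[OF s] by linarith
  have Dfin: "D fin = 0" unfolding D_def by (simp add: rp_fin)
  have Dfail: "D fail = 0" unfolding D_def by (simp add: rp_fail[OF mc])
  define T where "T = {t \<in> S. D t = M}"
  have "M \<in> D ` S" unfolding M_def using finS s by (intro Max_in) auto
  then have TS: "T \<noteq> {}" unfolding T_def by auto
  have finT: "fin \<notin> T" and failT: "fail \<notin> T" using Dfin Dfail Mpos unfolding T_def by auto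
  have clos: "succs E t \<subseteq> T" if t: "t \<in> T" "t \<noteq> x" for t
  proof
    fix u assume u: "u \<in> succs E t"
    have tS: "t \<in> S - {fin, fail}" using t finT failT unfolding T_def by auto
    have fs: "finite (succs E t)" using succs_S[OF mc] by blast
    have h1: "reach_prob E fin fail val' t = (\<Sum>v \<in> succs E t. val t v * reach_prob E fin fail val' v)"
      using harmonic[OF mc gp', of t] tS same t(2) by simp
    have h2: "reach_prob E fin fail val t = (\<Sum>v \<in> succs E t. val t v * reach_prob E fin fail val v)"
      using harmonic[OF mc gp, of t] tS by simp
    have "D t = (\<Sum>v \<in> succs E t. val t v * reach_prob E fin fail val' v) - (\<Sum>v \<in> succs E t. val t v * reach_prob E fin fail val v)"
      unfolding D_def h1 h2 ..
    also have "\<dots> = (\<Sum>v \<in> succs E t. val t v * reach_prob E fin fail val' v - val t v * reach_prob E fin fail val v)"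
      by (rule sum_subtractf[symmetric])
    also have "\<dots> = (\<Sum>v \<in> succs E t. val t v * D v)"
      unfolding D_def by (rule sum.cong) (simp_all add: right_diff_distrib)
    finally have Dt: "D t = (\<Sum>v \<in> succs E t. val t v * D v)" .
    have s1: "(\<Sum>v \<in> succs E t. val t v) = 1" using gp tS unfolding graph_preserving_def by auto
    have "(\<Sum>v \<in> succs E t. val t v * (M - D v)) = (\<Sum>v \<in> succs E t. val t v * M - val t v * D v)"
      by (rule sum.cong) (simp_all add: right_diff_distrib)
    also have "\<dots> = (\<Sum>v \<in> succs E t. val t v * M) - (\<Sum>v \<in> succs E t. val t v * D v)"
      by (rule sum_subtractf)
    also have "(\<Sum>v \<in> succs E t. val t v * M) = (\<Sum>v \<in> succs E t. val t v) * M"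
      by (rule sum_distrib_right[symmetric])
    finally have "(\<Sum>v \<in> succs E t. val t v * (M - D v)) = M - D t" using s1 Dt by simp
    then have z: "(\<Sum>v \<in> succs E t. val t v * (M - D v)) = 0" using t unfolding T_def by simp
    have nn: "\<forall>v \<in> succs E t. 0 \<le> val t v * (M - D v)"
      using DleM succs_S[OF mc] vpos[OF mc gp] by (simp add: subset_iff less_imp_le)
    have "\<forall>v\<in>succs E t. val t v * (M - D v) = 0"
      using sum_nonneg_eq_0_iff[OF fs bspec[OF nn]] z by simp
    then have "val t u * (M - D u) = 0" using u by blast
    then have "D u = M" using vpos[OF mc gp u] by simp
    then show "u \<in> T" unfolding T_def using u succs_S[OF mc] by auto
  qed
  obtain t where t: "t \<in> T" using TS by auto
  have "(t, fin) \<in> E\<^sup>*" using reach_fin[OF mc fail_class] t failT unfolding T_def by auto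
  have reachT: "v \<in> T \<or> x \<in> T" if "(t, v) \<in> E\<^sup>*" for v
    using that
  proof (induction rule: rtrancl_induct)
    case base then show ?case using t by simp
  next
    case (step w v')
    then have "v' \<in> succs E w" unfolding succs_def by simp
    then show ?case using step.IH clos[of w] by (cases "x \<in> T") auto
  qed
  have xT: "x \<in> T" using reachT[OF \<open>(t, fin) \<in> E\<^sup>*\<close>] finT by simp
  have xS: "x \<in> S" using xT unfolding T_def by simp
  have e1: "reach_prob E fin fail val x = reach_prob E fin fail val y" using eqxy gp by blast
  have e2: "reach_prob E fin fail val' x = reach_prob E fin fail val' y" using eqxy gp' by blast
  have "D y = D x" unfolding D_def e1 e2 ..
  then have yT: "y \<in> T" using xT y unfolding T_def by simp
  have pT: "v \<in> T \<and> v \<noteq> x" if "(y, v) \<in> {(a, b). (a, b) \<in> E \<and> b \<noteq> x}\<^sup>*" for v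
    using that
  proof (induction rule: rtrancl_induct)
    case base then show ?case using yT y by simp
  next
    case (step w v')
    then have "v' \<in> succs E w" unfolding succs_def by simp
    then show ?case using step.IH step.hyps(2) clos[of w] by auto
  qed
  show False using pT[OF path] finT by simp
qed


lemma key:
  assumes mc: "tpmc S E fin fail"
    and fail_class: "equiv_class S E fin fail fail = {fail}"
    and two: "card (succs E x) = 2"
    and xS: "x \<in> S" "x \<noteq> fin" "x \<noteq> fail"
    and y: "y \<in> S" "x \<noteq> y"
    and eqxy: "\<forall>val. graph_preserving S E fin fail val \<longrightarrow>
        reach_prob E fin fail val x = reach_prob E fin fail val y"
    and a: "a \<in> succs E x"
    and path: "(y, fin) \<in> {(a, b). (a, b) \<in> E \<and> b \<noteq> x}\<^sup>*"
  shows "\<forall>val. graph_preserving S E fin fail val \<longrightarrow>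
        reach_prob E fin fail val x = reach_prob E fin fail val a"
proof (intro allI impI)
  fix val assume gp: "graph_preserving S E fin fail val"
  obtain u v where uv: "succs E x = {u, v}" "u \<noteq> v" using two card_2_iff by metis
  obtain b where ab: "succs E x = {a, b}" "a \<noteq> b"
  proof (cases "a = u")
    case True then show ?thesis using that uv by auto
  next
    case False then have "a = v" using a uv by auto
    then show ?thesis using that uv by auto
  qed
  have aS: "a \<in> S" and bS: "b \<in> S" using succs_S[OF mc, of x] ab by auto
  define p where "p = val x a"
  have pa: "p > 0" unfolding p_def using vpos[OF mc gp] ab by auto
  have pb: "val x b > 0" using vpos[OF mc gp] ab by auto
  have "(\<Sum>t \<in> succs E x. val x t) = 1" using gp xS unfolding graph_preserving_def by auto
  then have psum: "p + val x b = 1" using ab unfolding p_def by simp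
  define q where "q = p / 2"
  define val' where "val' = val(x := (\<lambda>t. if t = a then q else 1 - q))"
  have same: "\<forall>s. s \<noteq> x \<longrightarrow> val' s = val s" unfolding val'_def by simp
  have same2: "\<forall>s. s \<noteq> x \<longrightarrow> val s = val' s" unfolding val'_def by simp
  have gp': "graph_preserving S E fin fail val'"
    unfolding graph_preserving_def
  proof
    fix s assume s: "s \<in> S - {fin, fail}"
    show "(\<forall>t\<in>succs E s. 0 < val' s t) \<and> (\<Sum>t\<in>succs E s. val' s t) = 1"
    proof (cases "s = x")
      case True
      have "q > 0" "1 - q > 0" using pa pb psum unfolding q_def by auto
      then show ?thesis using True ab unfolding val'_def by auto
    next
      case False
      then show ?thesis using gp s unfolding graph_preserving_def val'_def by auto
    qed
  qed
  have eq: "reach_prob E fin fail val' s = reach_prob E fin fail val s" if "s \<in> S" for s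
  proof -
    have "reach_prob E fin fail val' s - reach_prob E fin fail val s \<le> 0"
      by (rule perturb_le[OF mc fail_class gp gp' same y eqxy path that])
    moreover have "reach_prob E fin fail val s - reach_prob E fin fail val' s \<le> 0"
      by (rule perturb_le[OF mc fail_class gp' gp same2 y eqxy path that])
    ultimately show ?thesis by simp
  qed
  define Pa where "Pa = reach_prob E fin fail val a"
  define Pb where "Pb = reach_prob E fin fail val b"
  have h: "reach_prob E fin fail val x = p * Pa + val x b * Pb"
    using harmonic[OF mc gp xS(2,3)] ab unfolding p_def Pa_def Pb_def by simp
  have "reach_prob E fin fail val' x = val' x a * reach_prob E fin fail val' a + val' x b * reach_prob E fin fail val' b"
    using harmonic[OF mc gp' xS(2,3)] ab by simp
  then have h': "reach_prob E fin fail val' x = q * Pa + (1 - q) * Pb"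
    using eq[OF aS] eq[OF bS] ab unfolding val'_def Pa_def Pb_def by simp
  have vb: "val x b = 1 - p" using psum by simp
  have "p * Pa + (1 - p) * Pb = q * Pa + (1 - q) * Pb"
    using h h' eq[OF xS(1)] unfolding vb by simp
  then have "(p - q) * (Pa - Pb) = 0" by (simp add: algebra_simps)
  moreover have "p - q > 0" using pa unfolding q_def by simp
  ultimately have "Pa = Pb" by simp
  then show "reach_prob E fin fail val x = reach_prob E fin fail val a"
    using h unfolding vb Pa_def by (simp add: algebra_simps)
qed


theorem theorem7:
  fixes S :: "'a set" and E :: "('a \<times> 'a) set" and fin fail :: 'a and s0 :: 'a
  assumes mc: "tpmc S E fin fail"
    and fin_class: "equiv_class S E fin fail fin = {fin}"
    and fail_class: "equiv_class S E fin fail fail = {fail}"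
    and no_self_loop: "\<forall>s. (s, s) \<notin> E"
    and two_succs: "\<forall>s \<in> S - {fin, fail}. card (succs E s) = 2"
    and s0: "s0 \<in> S"
    and not_fin: "fin \<notin> equiv_class S E fin fail s0"
    and not_fail: "fail \<notin> equiv_class S E fin fail s0"
  shows "\<exists>!x. is_exit E (equiv_class S E fin fail s0) x"
proof -
  define C where "C = equiv_class S E fin fail s0"
  have finS: "fin \<in> S" and failS: "fail \<in> S" using mc unfolding tpmc_def by auto
  have s0C: "s0 \<in> C" unfolding C_def equiv_class_def equiv_states_def using s0 by auto
  have Cprops: "x \<in> S \<and> x \<noteq> fin \<and> x \<noteq> fail \<and>
      (\<forall>val. graph_preserving S E fin fail val \<longrightarrow>
        reach_prob E fin fail val s0 = reach_prob E fin fail val x)" if "x \<in> C" for x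
    using that not_fin not_fail unfolding C_def equiv_class_def equiv_states_def by auto
  have keyC: False if ex: "is_exit E C x" and xy: "x \<noteq> y" and yC: "y \<in> C"
     and path: "(y, fin) \<in> {(a, b). (a, b) \<in> E \<and> b \<noteq> x}\<^sup>*" for x y
  proof -
    have xC: "x \<in> C" using ex unfolding is_exit_def by simp
    obtain a where a: "a \<in> succs E x" "a \<notin> C" using ex unfolding is_exit_def by auto
    have aS: "a \<in> S" using a succs_S[OF mc] by auto
    note X = Cprops[OF xC] and Y = Cprops[OF yC]
    have two: "card (succs E x) = 2" using two_succs X by auto
    have eqxy: "\<forall>val. graph_preserving S E fin fail val \<longrightarrow>
        reach_prob E fin fail val x = reach_prob E fin fail val y" using X Y by auto
    have "\<forall>val. graph_preserving S E fin fail val \<longrightarrow>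
        reach_prob E fin fail val x = reach_prob E fin fail val a"
      using key[OF mc fail_class two _ _ _ _ xy eqxy a(1) path] X Y by auto
    then have "a \<in> C" using X aS unfolding C_def equiv_class_def equiv_states_def by auto
    then show False using a by simp
  qed
  have existence: "\<exists>x. is_exit E C x"
  proof (rule ccontr)
    assume "\<nexists>x. is_exit E C x"
    then have cl: "\<forall>u\<in>C. succs E u \<subseteq> C" unfolding is_exit_def by auto
    have "fin \<notin> C" using not_fin C_def by simp
    then have "\<forall>val. reach_prob E fin fail val s0 = 0" using closed_zero[OF cl _ s0C] by blast
    then have "fail \<in> C" using rp_fail[OF mc] failS unfolding C_def equiv_class_def equiv_states_def by auto
    then show False using not_fail C_def by simp
  qed
  have uniq: "x = y" if ex: "is_exit E C x" and ey: "is_exit E C y" for x y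
  proof (rule ccontr)
    assume xy: "x \<noteq> y"
    have xC: "x \<in> C" and yC: "y \<in> C" using ex ey unfolding is_exit_def by auto
    have "(x, fin) \<in> E\<^sup>*" using reach_fin[OF mc fail_class] Cprops[OF xC] by auto
    then have p1: "(x, fin) \<in> {(a, b). (a, b) \<in> E \<and> b \<noteq> x}\<^sup>*"
      using path_avoid[of x fin E x] by auto
    from path_avoid[OF p1, of y]
    show False
    proof
      assume "(x, fin) \<in> {(a, b). (a, b) \<in> {(a, b). (a, b) \<in> E \<and> b \<noteq> x} \<and> b \<noteq> y}\<^sup>*"
      then have "(x, fin) \<in> {(a, b). (a, b) \<in> E \<and> b \<noteq> y}\<^sup>*"
        by (rule rtrancl_mono[THEN subsetD, rotated]) auto
      then show False using keyC[OF ey _ xC] xy by auto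
    next
      assume "(y, fin) \<in> {(a, b). (a, b) \<in> {(a, b). (a, b) \<in> E \<and> b \<noteq> x} \<and> b \<noteq> y}\<^sup>*"
      then have "(y, fin) \<in> {(a, b). (a, b) \<in> E \<and> b \<noteq> x}\<^sup>*"
        by (rule rtrancl_mono[THEN subsetD, rotated]) auto
      then show False using keyC[OF ex xy yC] by auto
    qed
  qed
  show ?thesis unfolding C_def[symmetric] using existence uniq by blast
qed

end
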